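(* Fix $\lambda_1,\lambda_2,\lambda_3\in\mathbb{Z}_{\ge0}$. Let $\mathbf{w}=[w_1,w_2,\dots]$ be an infinite reduced sequence and $\{k_j\}_{j\ge1}$ its ratio number sequence. Then: (1) if each of $1,2,3$ appears infinitely many times in $\mathbf{w}$, then $\lim_{j\to\infty}k_j=3+\lambda_1+\lambda_2+\lambda_3$; (2) if some index $i\in\{1,2,3\}$ appears only finitely many times in $\mathbf{w}$, then there exists a real number $k_\beta$ with $\lim_{j\to\infty}k_j=k_\beta$.
   Context: Generalized Markov mutations (for the equation $X_1^2+X_2^2+X_3^2+\lambda_3X_1X_2+\lambda_1X_2X_3+\lambda_2X_3X_1=(3+\lambda_1+\lambda_2+\lambda_3)X_1X_2X_3$) are the maps on positive rational triples $\mu_1(x_1,x_2,x_3)=(\frac{x_2^2+\lambda_1x_2x_3+x_3^2}{x_1},x_2,x_3)$, $\mu_2(x_1,x_2,x_3)=(x_1,\frac{x_1^2+\lambda_2x_1x_3+x_3^2}{x_2},x_3)$, $\mu_3(x_1,x_2,x_3)=(x_1,x_2,\frac{x_1^2+\lambda_3x_1x_2+x_2^2}{x_3})$. A sequence $\mathbf{w}=[w_1,w_2,\dots]$ with entries in $\{1,2,3\}$ is reduced if $w_i\ne w_{i+1}$ for all $i$. Ratio number sequence: set $T_0=(1,1,1)$ and $T_j=\mu_{w_j}(T_{j-1})$ for $j\ge1$; $k_j$ is the $w_j$-th component of $T_j$ divided by the product of the other two components of $T_j$. *)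

theory Defs
  imports "HOL-Analysis.Analysis"
begin

type_synonym triple = "real \<times> real \<times> real"

fun gmut :: "nat \<Rightarrow> nat \<Rightarrow> nat \<Rightarrow> nat \<Rightarrow> triple \<Rightarrow> triple" where
  "gmut l1 l2 l3 i (x1, x2, x3) =
     (if i = 1 then ((x2^2 + real l1 * x2 * x3 + x3^2) / x1, x2, x3)
      else if i = 2 then (x1, (x1^2 + real l2 * x1 * x3 + x3^2) / x2, x3)
      else (x1, x2, (x1^2 + real l3 * x1 * x2 + x2^2) / x3))"

text \<open>Sequence w indexed from 1: w j is w_j for j >= 1 (w 0 is ignored).
  T 0 = (1,1,1), T j = mu_{w j} (T (j-1)).\<close>
fun Tseq :: "nat \<Rightarrow> nat \<Rightarrow> nat \<Rightarrow> (nat \<Rightarrow> nat) \<Rightarrow> nat \<Rightarrow> triple" where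
  "Tseq l1 l2 l3 w 0 = (1, 1, 1)"
| "Tseq l1 l2 l3 w (Suc j) = gmut l1 l2 l3 (w (Suc j)) (Tseq l1 l2 l3 w j)"

fun comp_ratio :: "nat \<Rightarrow> triple \<Rightarrow> real" where
  "comp_ratio i (x1, x2, x3) =
     (if i = 1 then x1 / (x2 * x3) else if i = 2 then x2 / (x1 * x3) else x3 / (x1 * x2))"

text \<open>Ratio number k_j (meaningful for j >= 1).\<close>
definition ratio_num :: "nat \<Rightarrow> nat \<Rightarrow> nat \<Rightarrow> (nat \<Rightarrow> nat) \<Rightarrow> nat \<Rightarrow> real" where
  "ratio_num l1 l2 l3 w j = comp_ratio (w j) (Tseq l1 l2 l3 w j)"

definition reduced_seq :: "(nat \<Rightarrow> nat) \<Rightarrow> bool" where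
  "reduced_seq w \<longleftrightarrow> (\<forall>j\<ge>1. w j \<in> {1,2,3}) \<and> (\<forall>j\<ge>1. w j \<noteq> w (Suc j))"

end

theory Submission
  imports Defs
begin

definition pos3 :: "triple \<Rightarrow> bool" where
  "pos3 t = (case t of (x1,x2,x3) \<Rightarrow> x1 > 0 \<and> x2 > 0 \<and> x3 > 0)"

definition inv3 :: "nat \<Rightarrow> nat \<Rightarrow> nat \<Rightarrow> triple \<Rightarrow> bool" where
  "inv3 l1 l2 l3 t = (case t of (x1,x2,x3) \<Rightarrow>
     x1^2+x2^2+x3^2 + real l3*x1*x2 + real l1*x2*x3 + real l2*x3*x1
      = (3+real l1+real l2+real l3)*x1*x2*x3)"

fun cmp :: "nat \<Rightarrow> triple \<Rightarrow> real" where
  "cmp i (x1,x2,x3) = (if i = 1 then x1 else if i = 2 then x2 else x3)"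

lemma vieta:
  fixes x y C B :: real
  assumes "x \<noteq> 0" "x^2 + B*x + C = 0" "y = C / x"
  shows "y^2 + B*y + C = 0"
proof -
  have "y * x = C" using assms by simp
  have "x^2 * (y^2 + B*y + C) = C * (C + B*x + x^2)"
    using \<open>y*x = C\<close> by (simp add: power2_eq_square algebra_simps)
  also have "\<dots> = 0" using assms(2) by (simp add: algebra_simps)
  finally show ?thesis using assms(1) by simp
qed

lemma gmut_pos: "pos3 t \<Longrightarrow> pos3 (gmut l1 l2 l3 i t)"
  by (cases t) (auto simp: pos3_def add_pos_nonneg)

lemma gmut_inv:
  assumes "pos3 t" "inv3 l1 l2 l3 t"
  shows "inv3 l1 l2 l3 (gmut l1 l2 l3 i t)"
proof -
  obtain x1 x2 x3 where t: "t = (x1,x2,x3)" by (cases t)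
  let ?K = "3+real l1+real l2+real l3"
  have p: "x1 > 0" "x2 > 0" "x3 > 0" using assms(1) t by (auto simp: pos3_def)
  have e: "x1^2+x2^2+x3^2 + real l3*x1*x2 + real l1*x2*x3 + real l2*x3*x1 = ?K*x1*x2*x3"
    using assms(2) t by (simp add: inv3_def)
  show ?thesis
  proof (cases "i = 1")
    case True
    define y where "y = (x2^2 + real l1*x2*x3 + x3^2)/x1"
    have q: "x1^2 + (real l3*x2 + real l2*x3 - ?K*x2*x3)*x1 + (x2^2 + real l1*x2*x3 + x3^2) = 0"
      using e by (simp add: algebra_simps power2_eq_square)
    have r: "y^2 + (real l3*x2 + real l2*x3 - ?K*x2*x3)*y + (x2^2 + real l1*x2*x3 + x3^2) = 0"
      by (rule vieta[OF _ q y_def]) (use p in auto)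
    have g: "gmut l1 l2 l3 i t = (y,x2,x3)" using True t y_def by simp
    show ?thesis unfolding g inv3_def using r by (simp add: algebra_simps power2_eq_square)
  next
    case F1: False
    show ?thesis
    proof (cases "i = 2")
      case True
      define y where "y = (x1^2 + real l2*x1*x3 + x3^2)/x2"
      have q: "x2^2 + (real l3*x1 + real l1*x3 - ?K*x1*x3)*x2 + (x1^2 + real l2*x1*x3 + x3^2) = 0"
        using e by (simp add: algebra_simps power2_eq_square)
      have r: "y^2 + (real l3*x1 + real l1*x3 - ?K*x1*x3)*y + (x1^2 + real l2*x1*x3 + x3^2) = 0"
        by (rule vieta[OF _ q y_def]) (use p in auto)
      have g: "gmut l1 l2 l3 i t = (x1,y,x3)" using True F1 t y_def by simp
      show ?thesis unfolding g inv3_def using r by (simp add: algebra_simps power2_eq_square)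
    next
      case False
      define y where "y = (x1^2 + real l3*x1*x2 + x2^2)/x3"
      have q: "x3^2 + (real l1*x2 + real l2*x1 - ?K*x1*x2)*x3 + (x1^2 + real l3*x1*x2 + x2^2) = 0"
        using e by (simp add: algebra_simps power2_eq_square)
      have r: "y^2 + (real l1*x2 + real l2*x1 - ?K*x1*x2)*y + (x1^2 + real l3*x1*x2 + x2^2) = 0"
        by (rule vieta[OF _ q y_def]) (use p in auto)
      have g: "gmut l1 l2 l3 i t = (x1,x2,y)" using False F1 t y_def by simp
      show ?thesis unfolding g inv3_def using r by (simp add: algebra_simps power2_eq_square)
    qed
  qed
qed


lemma ratio_mono_aux:
  fixes a b c p :: real
  assumes "a > 0" "b > 0" "c > 0" "p \<ge> 0"
  shows "a / (b * c) \<le> (a^2 + p) / (a * b * c)"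
proof -
  have "a / (b*c) = a^2 / (a*b*c)" using assms by (simp add: power2_eq_square field_simps)
  also have "\<dots> \<le> (a^2 + p) / (a*b*c)" using assms by (intro divide_right_mono) auto
  finally show ?thesis .
qed

lemma ratio_mono:
  assumes "pos3 t" "i \<in> {1,2,3}" "m \<in> {1,2,3}" "i \<noteq> m"
  shows "comp_ratio i t \<le> comp_ratio m (gmut l1 l2 l3 m t)"
proof -
  obtain x1 x2 x3 where t: "t = (x1,x2,x3)" by (cases t)
  have p: "x1 > 0" "x2 > 0" "x3 > 0" using assms(1) t by (auto simp: pos3_def)
  have n: "real l \<ge> 0" for l by simp
  from assms(2-4) consider "i=1" "m=2" | "i=1" "m=3" | "i=2" "m=1" | "i=2" "m=3" | "i=3" "m=1" | "i=3" "m=2"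
    by auto
  then show ?thesis
  proof cases
    case 1
    have "x1/(x2*x3) \<le> (x1^2 + (real l2*x1*x3 + x3^2))/(x1*x2*x3)"
      by (rule ratio_mono_aux) (use p in \<open>auto intro!: add_nonneg_nonneg\<close>)
    then show ?thesis using 1 t by (simp add: field_simps)
  next
    case 2
    have "x1/(x2*x3) \<le> (x1^2 + (real l3*x1*x2 + x2^2))/(x1*x2*x3)"
      by (rule ratio_mono_aux) (use p in \<open>auto intro!: add_nonneg_nonneg\<close>)
    then show ?thesis using 2 t by (simp add: field_simps)
  next
    case 3
    have "x2/(x1*x3) \<le> (x2^2 + (real l1*x2*x3 + x3^2))/(x2*x1*x3)"
      by (rule ratio_mono_aux) (use p in \<open>auto intro!: add_nonneg_nonneg\<close>)
    then show ?thesis using 3 t by (simp add: field_simps)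
  next
    case 4
    have "x2/(x1*x3) \<le> (x2^2 + (real l3*x1*x2 + x1^2))/(x2*x1*x3)"
      by (rule ratio_mono_aux) (use p in \<open>auto intro!: add_nonneg_nonneg\<close>)
    then show ?thesis using 4 t by (simp add: field_simps)
  next
    case 5
    have "x3/(x1*x2) \<le> (x3^2 + (real l1*x2*x3 + x2^2))/(x3*x1*x2)"
      by (rule ratio_mono_aux) (use p in \<open>auto intro!: add_nonneg_nonneg\<close>)
    then show ?thesis using 5 t by (simp add: field_simps)
  next
    case 6
    have "x3/(x1*x2) \<le> (x3^2 + (real l2*x1*x3 + x1^2))/(x3*x1*x2)"
      by (rule ratio_mono_aux) (use p in \<open>auto intro!: add_nonneg_nonneg\<close>)
    then show ?thesis using 6 t by (simp add: field_simps)
  qed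
qed


lemma bound_gen:
  fixes y a b p q r K N :: real
  assumes pos: "y > 0" "a > 0" "b > 0" and nn: "p \<ge> 0" "q \<ge> 0" "r \<ge> 0"
    and eq: "y^2 + a^2 + b^2 + p*y*a + r*a*b + q*b*y = K*y*a*b"
    and k2: "y/(a*b) \<ge> 2" and N: "N \<ge> 1" "a \<ge> N" "b \<ge> N"
  shows "K - (1+p+q+r)/N \<le> y/(a*b) \<and> y/(a*b) \<le> K"
proof -
  define k where "k = y/(a*b)"
  define D where "D = (a^2+b^2+r*a*b)/(y*a*b)"
  have yk: "y = k*a*b" using pos k_def by simp
  have keq: "k + D + p/b + q/a = K"
  proof -
    have "(y^2 + a^2 + b^2 + p*y*a + r*a*b + q*b*y)/(y*a*b) = K" using eq pos by simp
    moreover have "(y^2 + a^2 + b^2 + p*y*a + r*a*b + q*b*y)/(y*a*b) = k + D + p/b + q/a"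
      unfolding k_def D_def using pos by (simp add: field_simps power2_eq_square)
    ultimately show ?thesis by simp
  qed
  have D0: "D \<ge> 0" unfolding D_def using pos nn by simp
  have pb: "p/b \<ge> 0" "q/a \<ge> 0" using pos nn by auto
  have up: "k \<le> K" using keq D0 pb by linarith
  have Dle: "D \<le> (a^2+b^2+r*a*b)/(2*a^2*b^2)"
  proof -
    have "D = (a^2+b^2+r*a*b)/(k*a^2*b^2)" unfolding D_def yk by (simp add: power2_eq_square mult_ac)
    also have "\<dots> \<le> (a^2+b^2+r*a*b)/(2*a^2*b^2)"
    proof (rule divide_left_mono)
      have "a^2*b^2 > 0" using pos by simp
      then show "2*a^2*b^2 \<le> k*a^2*b^2" using k2 k_def
        by (metis mult.assoc mult_right_mono less_imp_le)
      show "0 \<le> a^2+b^2+r*a*b" using pos nn by simp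
      show "0 < k*a^2*b^2 * (2*a^2*b^2)" using pos k2 k_def by simp
    qed
    finally show ?thesis .
  qed
  have split: "(a^2+b^2+r*a*b)/(2*a^2*b^2) = 1/(2*b^2) + 1/(2*a^2) + r/(2*(a*b))"
    using pos by (simp add: field_simps power2_eq_square)
  have a1: "a \<ge> 1" "b \<ge> 1" using N by auto
  have "a^2 \<ge> a" "b^2 \<ge> b" using a1 by (auto simp: power2_eq_square)
  hence sq: "a^2 \<ge> N" "b^2 \<ge> N" using N by auto
  have "a*1 \<le> a*b" using a1 pos by (intro mult_left_mono) auto
  hence ab: "a*b \<ge> N" using N by linarith
  have Npos: "N > 0" using N by simp
  have t1: "1/(2*b^2) \<le> 1/(2*N)" using sq Npos by (intro divide_left_mono) (use pos in auto)
  have t2: "1/(2*a^2) \<le> 1/(2*N)" using sq Npos by (intro divide_left_mono) (use pos in auto)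
  have t3: "r/(2*(a*b)) \<le> r/N" using ab Npos nn by (intro divide_left_mono) (use pos in auto)
  have t4: "p/b \<le> p/N" using N Npos nn by (intro divide_left_mono) (use pos in auto)
  have t5: "q/a \<le> q/N" using N Npos nn by (intro divide_left_mono) (use pos in auto)
  have sumN: "1/(2*N) + 1/(2*N) + r/N + p/N + q/N = (1+p+q+r)/N" using Npos by (simp add: field_simps)
  have "K - (1+p+q+r)/N \<le> k" using keq Dle split t1 t2 t3 t4 t5 sumN by linarith
  with up show ?thesis unfolding k_def by simp
qed


lemma bound_t:
  assumes "pos3 t" "inv3 l1 l2 l3 t" "i \<in> {1,2,3}" "comp_ratio i t \<ge> 2" "N \<ge> 1"
    "\<forall>m\<in>{1,2,3}. cmp m t \<ge> N"
  shows "3+real l1+real l2+real l3 - (1+real l1+real l2+real l3)/N \<le> comp_ratio i t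
     \<and> comp_ratio i t \<le> 3+real l1+real l2+real l3"
proof -
  obtain x1 x2 x3 where t: "t = (x1,x2,x3)" by (cases t)
  have p: "x1 > 0" "x2 > 0" "x3 > 0" using assms(1) t by (auto simp: pos3_def)
  have e: "x1^2+x2^2+x3^2 + real l3*x1*x2 + real l1*x2*x3 + real l2*x3*x1
      = (3+real l1+real l2+real l3)*x1*x2*x3"
    using assms(2) t by (simp add: inv3_def)
  have N: "x1 \<ge> N" "x2 \<ge> N" "x3 \<ge> N" using assms(6) t by auto
  from assms(3) consider "i=1" | "i=2" | "i=3" by auto
  then show ?thesis
  proof cases
    case 1
    have "3+real l1+real l2+real l3 - (1+real l3+real l2+real l1)/N \<le> x1/(x2*x3) \<and> x1/(x2*x3) \<le> 3+real l1+real l2+real l3"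
      by (rule bound_gen[where r="real l1"]) (use p e N assms(4,5) 1 t in \<open>auto simp: algebra_simps\<close>)
    then show ?thesis using 1 t by (simp add: ac_simps)
  next
    case 2
    have "3+real l1+real l2+real l3 - (1+real l3+real l1+real l2)/N \<le> x2/(x1*x3) \<and> x2/(x1*x3) \<le> 3+real l1+real l2+real l3"
      by (rule bound_gen[where r="real l2"]) (use p e N assms(4,5) 2 t in \<open>auto simp: algebra_simps\<close>)
    then show ?thesis using 2 t by (simp add: ac_simps)
  next
    case 3
    have "3+real l1+real l2+real l3 - (1+real l2+real l1+real l3)/N \<le> x3/(x1*x2) \<and> x3/(x1*x2) \<le> 3+real l1+real l2+real l3"
      by (rule bound_gen[where r="real l3"]) (use p e N assms(4,5) 3 t in \<open>auto simp: algebra_simps\<close>)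
    then show ?thesis using 3 t by (simp add: ac_simps)
  qed
qed

lemma big_t:
  assumes "pos3 t" "i \<in> {1,2,3}" "comp_ratio i t \<ge> 2" "\<forall>m\<in>{1,2,3}-{i}. cmp m t \<ge> 1"
  shows "cmp i t \<ge> 2 \<and> (\<forall>m\<in>{1,2,3}-{i}. cmp i t \<ge> 2 * cmp m t)"
proof -
  obtain x1 x2 x3 where t: "t = (x1,x2,x3)" by (cases t)
  have p: "x1 > 0" "x2 > 0" "x3 > 0" using assms(1) t by (auto simp: pos3_def)
  have key: "y \<ge> 2 \<and> y \<ge> 2*a \<and> y \<ge> 2*b" if "a \<ge> 1" "b \<ge> 1" "y/(a*b) \<ge> 2" for y a b :: real
  proof -
    have "y \<ge> 2*(a*b)" using that by (simp add: field_simps)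
    moreover have "a*b \<ge> a" "a*b \<ge> b" "a*b \<ge> 1" using that
      by (auto intro: order_trans[OF _ mult_right_mono[of 1 a b, simplified]] simp: mult_le_cancel_left1)
    ultimately show ?thesis by linarith
  qed
  from assms(2) consider "i=1" | "i=2" | "i=3" by auto
  then show ?thesis
  proof cases
    case 1
    have h: "x2 \<ge> 1" "x3 \<ge> 1" using assms(4) 1 t by (auto dest: bspec[where x=2] bspec[where x=3])
    have r: "x1/(x2*x3) \<ge> 2" using assms(3) 1 t by simp
    show ?thesis using key[OF h r] 1 t by auto
  next
    case 2
    have h: "x1 \<ge> 1" "x3 \<ge> 1" using assms(4) 2 t by (auto dest: bspec[where x=1] bspec[where x=3])
    have r: "x2/(x1*x3) \<ge> 2" using assms(3) 2 t by simp
    show ?thesis using key[OF h r] 2 t by auto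
  next
    case 3
    have h: "x1 \<ge> 1" "x2 \<ge> 1" using assms(4) 3 t by (auto dest: bspec[where x=1] bspec[where x=2])
    have r: "x3/(x1*x2) \<ge> 2" using assms(3) 3 t by simp
    show ?thesis using key[OF h r] 3 t by auto
  qed
qed

lemma cmp_gmut: "m \<in> {1,2,3} \<Longrightarrow> i \<in> {1,2,3} \<Longrightarrow> m \<noteq> i \<Longrightarrow> cmp m (gmut l1 l2 l3 i t) = cmp m t"
  by (cases t) auto


lemma T_pos_inv: "pos3 (Tseq l1 l2 l3 w n) \<and> inv3 l1 l2 l3 (Tseq l1 l2 l3 w n)"
proof (induction n)
  case 0
  then show ?case by (simp add: pos3_def inv3_def)
next
  case (Suc n)
  then show ?case using gmut_pos gmut_inv by simp
qed

lemma rn_Suc: "ratio_num l1 l2 l3 w (Suc j) = comp_ratio (w (Suc j)) (gmut l1 l2 l3 (w (Suc j)) (Tseq l1 l2 l3 w j))"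
  by (simp add: ratio_num_def)

lemma rn_mono:
  assumes "reduced_seq w" "j \<ge> 1"
  shows "ratio_num l1 l2 l3 w j \<le> ratio_num l1 l2 l3 w (Suc j)"
proof -
  have "w j \<in> {1,2,3}" "w (Suc j) \<in> {1,2,3}" "w j \<noteq> w (Suc j)"
    using assms unfolding reduced_seq_def by auto
  then show ?thesis unfolding rn_Suc
    by (subst ratio_num_def) (rule ratio_mono[OF conjunct1[OF T_pos_inv]])
qed

lemma rn_ge2:
  assumes "reduced_seq w" "j \<ge> 1"
  shows "ratio_num l1 l2 l3 w j \<ge> 2"
  using assms(2)
proof (induction j rule: dec_induct)
  case base
  have "w 1 \<in> {1,2,3}" using assms(1) unfolding reduced_seq_def by auto
  then have "w (Suc 0) = 1 \<or> w (Suc 0) = 2 \<or> w (Suc 0) = 3" by auto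
  then show ?case unfolding ratio_num_def by auto
next
  case (step n)
  then show ?case using rn_mono[OF assms(1), of n l1 l2 l3] by linarith
qed


lemma T_ge1:
  assumes "reduced_seq w"
  shows "\<forall>m\<in>{1,2,3}. cmp m (Tseq l1 l2 l3 w n) \<ge> 1"
proof (induction n)
  case 0
  then show ?case by auto
next
  case (Suc n)
  let ?i = "w (Suc n)"
  have i: "?i \<in> {1,2,3}" using assms unfolding reduced_seq_def by auto
  have unch: "cmp m (Tseq l1 l2 l3 w (Suc n)) = cmp m (Tseq l1 l2 l3 w n)" if "m \<in> {1,2,3}" "m \<noteq> ?i" for m
    using cmp_gmut[OF that(1) i that(2)] by simp
  have oth: "\<forall>m\<in>{1,2,3}-{?i}. cmp m (Tseq l1 l2 l3 w (Suc n)) \<ge> 1" using unch Suc by auto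
  have "cmp ?i (Tseq l1 l2 l3 w (Suc n)) \<ge> 2"
    using big_t[OF conjunct1[OF T_pos_inv] i _ oth] rn_ge2[OF assms, of "Suc n" l1 l2 l3]
    unfolding ratio_num_def by auto
  then show ?case using oth by (metis Diff_iff empty_iff insert_iff one_le_numeral order_trans)
qed

lemma rn_le:
  assumes "reduced_seq w" "j \<ge> 1"
  shows "ratio_num l1 l2 l3 w j \<le> 3 + real l1 + real l2 + real l3"
proof -
  have i: "w j \<in> {1,2,3}" using assms unfolding reduced_seq_def by auto
  have "comp_ratio (w j) (Tseq l1 l2 l3 w j) \<ge> 2" using rn_ge2[OF assms] unfolding ratio_num_def .
  from bound_t[OF conjunct1[OF T_pos_inv] conjunct2[OF T_pos_inv] i this _ T_ge1[OF assms(1)]]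
  show ?thesis unfolding ratio_num_def by simp
qed

lemma T_lead:
  assumes "reduced_seq w" "n \<ge> 1"
  shows "cmp (w n) (Tseq l1 l2 l3 w n) \<ge> real n"
  using assms(2)
proof (induction n rule: dec_induct)
  case base
  have i: "w 1 \<in> {1,2,3}" using assms unfolding reduced_seq_def by auto
  have "cmp (w 1) (Tseq l1 l2 l3 w 1) \<ge> 2"
    using big_t[OF conjunct1[OF T_pos_inv] i _] rn_ge2[OF assms(1), of 1 l1 l2 l3] T_ge1[OF assms(1)]
    unfolding ratio_num_def by auto
  then show ?case by simp
next
  case (step n)
  let ?i = "w (Suc n)"
  have i: "?i \<in> {1,2,3}" "w n \<in> {1,2,3}" "w n \<noteq> ?i" using assms step(1) unfolding reduced_seq_def by auto
  have u: "cmp (w n) (Tseq l1 l2 l3 w (Suc n)) = cmp (w n) (Tseq l1 l2 l3 w n)"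
    using cmp_gmut[OF i(2) i(1) i(3)] by simp
  define t where "t = Tseq l1 l2 l3 w (Suc n)"
  have pt: "pos3 t" using T_pos_inv t_def by blast
  have rt: "comp_ratio ?i t \<ge> 2" using rn_ge2[OF assms(1), of "Suc n" l1 l2 l3] unfolding ratio_num_def t_def by simp
  have ot: "\<forall>m\<in>{1,2,3}-{?i}. cmp m t \<ge> 1" using T_ge1[OF assms(1), of l1 l2 l3 "Suc n"] unfolding t_def by blast
  have wn: "w n \<in> {1,2,3}-{?i}" using i by auto
  have "cmp ?i (Tseq l1 l2 l3 w (Suc n)) \<ge> 2 * cmp (w n) (Tseq l1 l2 l3 w (Suc n))"
    using big_t[OF pt i(1) rt ot] wn unfolding t_def by blast
  then show ?case using u step(1,3) by simp
qed

lemma T_hist: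
  assumes "reduced_seq w" "j \<ge> 1" "j \<le> n" "w j = i"
  shows "cmp i (Tseq l1 l2 l3 w n) \<ge> real j"
  using assms(3)
proof (induction n rule: dec_induct)
  case base
  then show ?case using T_lead[OF assms(1,2)] assms(4) by simp
next
  case (step n)
  show ?case
  proof (cases "w (Suc n) = i")
    case True
    then show ?thesis using T_lead[OF assms(1), of "Suc n" l1 l2 l3] step(1) by simp
  next
    case False
    have "i \<in> {1,2,3}" "w (Suc n) \<in> {1,2,3}" using assms unfolding reduced_seq_def by auto
    then show ?thesis using cmp_gmut[of i "w (Suc n)"] False step(3) by simp
  qed
qed


lemma rn_conv:
  assumes "reduced_seq w"
  shows "\<exists>L. ratio_num l1 l2 l3 w \<longlonglongrightarrow> L"
proof -
  have inc: "incseq (\<lambda>n. ratio_num l1 l2 l3 w (Suc n))"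
    by (rule incseq_SucI) (use rn_mono[OF assms] in simp)
  have bd: "\<forall>n. ratio_num l1 l2 l3 w (Suc n) \<le> 3 + real l1 + real l2 + real l3"
    using rn_le[OF assms] by simp
  obtain L where "(\<lambda>n. ratio_num l1 l2 l3 w (Suc n)) \<longlonglongrightarrow> L"
    using incseq_convergent[OF inc bd] by blast
  then show ?thesis using LIMSEQ_imp_Suc by blast
qed

lemma rn_lim:
  assumes "reduced_seq w" and inf: "\<forall>i\<in>{1,2,3::nat}. infinite {j. j \<ge> 1 \<and> w j = i}"
  shows "ratio_num l1 l2 l3 w \<longlonglongrightarrow> 3 + real l1 + real l2 + real l3"
proof (rule LIMSEQ_I)
  fix r :: real assume r: "r > 0"
  let ?K = "3 + real l1 + real l2 + real l3"
  let ?C = "1 + real l1 + real l2 + real l3"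
  obtain n0 :: nat where n0: "?C / r < real n0" using reals_Archimedean2 by blast
  define N where "N = Suc n0"
  have N1: "N \<ge> 1" unfolding N_def by simp
  have CN: "?C / real N < r"
  proof -
    have "?C < r * real N" using n0 r unfolding N_def by (simp add: field_simps)
    then show ?thesis using N1 by (simp add: field_simps)
  qed
  have ex: "\<exists>j\<ge>N. j \<ge> 1 \<and> w j = i" if "i \<in> {1,2,3}" for i
    using inf that unfolding infinite_nat_iff_unbounded_le by blast
  obtain j1 where j1: "j1 \<ge> N" "j1 \<ge> 1" "w j1 = 1" using ex[of 1] by auto
  obtain j2 where j2: "j2 \<ge> N" "j2 \<ge> 1" "w j2 = 2" using ex[of 2] by auto
  obtain j3 where j3: "j3 \<ge> N" "j3 \<ge> 1" "w j3 = 3" using ex[of 3] by auto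
  show "\<exists>no. \<forall>n\<ge>no. norm (ratio_num l1 l2 l3 w n - ?K) < r"
  proof (intro exI allI impI)
    fix n assume n: "n \<ge> max j1 (max j2 j3)"
    have n1: "n \<ge> 1" using n j1 by simp
    have c1: "cmp 1 (Tseq l1 l2 l3 w n) \<ge> real N"
      using T_hist[OF assms(1) j1(2) _ j1(3), of n l1 l2 l3] n j1 by simp
    have c2: "cmp 2 (Tseq l1 l2 l3 w n) \<ge> real N"
      using T_hist[OF assms(1) j2(2) _ j2(3), of n l1 l2 l3] n j2 by simp
    have c3: "cmp 3 (Tseq l1 l2 l3 w n) \<ge> real N"
      using T_hist[OF assms(1) j3(2) _ j3(3), of n l1 l2 l3] n j3 by simp
    have call: "\<forall>m\<in>{1,2,3}. cmp m (Tseq l1 l2 l3 w n) \<ge> real N" using c1 c2 c3 by auto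
    have i: "w n \<in> {1,2,3}" using assms(1) n1 unfolding reduced_seq_def by auto
    have r2: "comp_ratio (w n) (Tseq l1 l2 l3 w n) \<ge> 2" using rn_ge2[OF assms(1) n1] unfolding ratio_num_def .
    have "real N \<ge> 1" using N1 by simp
    from bound_t[OF conjunct1[OF T_pos_inv] conjunct2[OF T_pos_inv] i r2 this call]
    have "?K - ?C / real N \<le> ratio_num l1 l2 l3 w n \<and> ratio_num l1 l2 l3 w n \<le> ?K"
      unfolding ratio_num_def .
    then show "norm (ratio_num l1 l2 l3 w n - ?K) < r" using CN by (simp add: abs_if)
  qed
qed

theorem theorem6p6:
  fixes l1 l2 l3 :: nat and w :: "nat \<Rightarrow> nat"
  assumes "reduced_seq w"
  shows "((\<forall>i\<in>{1,2,3::nat}. infinite {j. j \<ge> 1 \<and> w j = i}) \<longrightarrow>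
            (ratio_num l1 l2 l3 w \<longlonglongrightarrow> 3 + real l1 + real l2 + real l3))
       \<and> ((\<exists>i\<in>{1,2,3::nat}. finite {j. j \<ge> 1 \<and> w j = i}) \<longrightarrow>
            (\<exists>k\<beta>::real. ratio_num l1 l2 l3 w \<longlonglongrightarrow> k\<beta>))"
  using rn_lim[OF assms] rn_conv[OF assms] by blast

end
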